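(* Let $t\ge 1$, $n\ge 1$, $q\ge 1$ be integers and $u=\lfloor(\frac{t}{2}+1)^2\rfloor$. An $(n,q)$ code $\mathcal{C}$ is a $t$-MIPPC$(n,q)$ if and only if there is no minimal forbidden configuration in $\mathcal{C}$ of size at most $u$.
   Context: Let $Q$ be an alphabet with $|Q|=q$; an $(n,q)$ code is a subset $\mathcal{C}\subseteq Q^n$. For $\mathcal{S}\subseteq Q^n$ and $1\le i\le n$ let $\mathcal{S}(i)=\{\mathbf{c}(i):\mathbf{c}\in\mathcal{S}\}$ and $\mathrm{desc}(\mathcal{S})=\mathcal{S}(1)\times\cdots\times\mathcal{S}(n)$. $\mathcal{C}$ is a $t$-MIPPC$(n,q)$ if for every nonempty $\mathcal{C}'\subseteq\mathcal{C}$ with $|\mathcal{C}'|\le t$, $\bigcap_{\mathcal{S}\in S_t(\mathcal{C}')}\mathcal{S}\neq\emptyset$, where $S_t(\mathcal{C}')=\{\mathcal{S}\subseteq\mathcal{C}:|\mathcal{S}|\le t,\ \mathrm{desc}(\mathcal{S})=\mathrm{desc}(\mathcal{C}')\}$. A configuration in $\mathcal{C}$ is a collection $\mathcal{F}=\{\mathcal{F}_1,\dots,\mathcal{F}_m\}$ of nonempty subsets $\mathcal{F}_i\subseteq\mathcal{C}$ with $|\mathcal{F}_i|\le t$ and $\bigcap_i\mathcal{F}_i=\emptyset$; it is minimal if $\bigcap_{j\neq i}\mathcal{F}_j\neq\emptyset$ for all $i$; its size is $|\bigcup_i\mathcal{F}_i|$. A (minimal) forbidden configuration in $\mathcal{C}$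 is a (minimal) configuration with $\mathrm{desc}(\mathcal{F}_1)=\cdots=\mathrm{desc}(\mathcal{F}_m)$, i.e. $\mathcal{F}_1(i)=\cdots=\mathcal{F}_m(i)$ for every $1\le i\le n$. *)

theory Defs
  imports Main "HOL-Library.Multiset" Complex_Main
begin

definition words :: "'a set \<Rightarrow> nat \<Rightarrow> 'a list set" where
  "words Q n = {w. length w = n \<and> set w \<subseteq> Q}"

definition is_code :: "'a set \<Rightarrow> nat \<Rightarrow> nat \<Rightarrow> 'a list set \<Rightarrow> bool" where
  "is_code Q n q C \<longleftrightarrow> finite Q \<and> card Q = q \<and> C \<subseteq> words Q n"

(* S(i), 0-based coordinate i *)
definition coord :: "'a list set \<Rightarrow> nat \<Rightarrow> 'a set" where
  "coord S i = {c ! i | c. c \<in> S}"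

definition desc :: "nat \<Rightarrow> 'a list set \<Rightarrow> 'a list set" where
  "desc n S = {w. length w = n \<and> (\<forall>i<n. w ! i \<in> coord S i)}"

definition S_t :: "nat \<Rightarrow> nat \<Rightarrow> 'a list set \<Rightarrow> 'a list set \<Rightarrow> 'a list set set" where
  "S_t n t C C' = {S. S \<subseteq> C \<and> card S \<le> t \<and> desc n S = desc n C'}"

definition is_MIPPC :: "nat \<Rightarrow> nat \<Rightarrow> 'a list set \<Rightarrow> bool" where
  "is_MIPPC n t C \<longleftrightarrow>
     (\<forall>C'. C' \<subseteq> C \<and> C' \<noteq> {} \<and> card C' \<le> t \<longrightarrow> \<Inter> (S_t n t C C') \<noteq> {})"

definition configuration :: "nat \<Rightarrow> 'a list set \<Rightarrow> 'a list set set \<Rightarrow> bool" where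
  "configuration t C F \<longleftrightarrow> finite F \<and> F \<noteq> {} \<and>
     (\<forall>Fi\<in>F. Fi \<noteq> {} \<and> Fi \<subseteq> C \<and> card Fi \<le> t) \<and> \<Inter> F = {}"

definition minimal_configuration :: "nat \<Rightarrow> 'a list set \<Rightarrow> 'a list set set \<Rightarrow> bool" where
  "minimal_configuration t C F \<longleftrightarrow> configuration t C F \<and>
     (\<forall>Fi\<in>F. \<Inter> (F - {Fi}) \<noteq> {})"

definition config_size :: "'a list set set \<Rightarrow> nat" where
  "config_size F = card (\<Union> F)"

definition forbidden :: "nat \<Rightarrow> 'a list set set \<Rightarrow> bool" where
  "forbidden n F \<longleftrightarrow> (\<forall>Fi\<in>F. \<forall>Fj\<in>F. \<forall>i<n. coord Fi i = coord Fj i)"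

definition minimal_forbidden_configuration ::
    "nat \<Rightarrow> nat \<Rightarrow> 'a list set \<Rightarrow> 'a list set set \<Rightarrow> bool" where
  "minimal_forbidden_configuration n t C F \<longleftrightarrow> minimal_configuration t C F \<and> forbidden n F"

end

theory Submission
  imports Defs
begin

lemma coord_desc:
  assumes "\<forall>c\<in>S. length c = n" "i < n"
  shows "coord S i = {w ! i | w. w \<in> desc n S}"
proof
  show "coord S i \<subseteq> {w ! i | w. w \<in> desc n S}"
  proof
    fix a assume "a \<in> coord S i"
    then obtain c where c: "c \<in> S" "a = c ! i" by (auto simp: coord_def)
    have "c \<in> desc n S" using c assms by (auto simp: desc_def coord_def)
    thus "a \<in> {w ! i | w. w \<in> desc n S}" using c by blast
  qed
  show "{w ! i | w. w \<in> desc n S} \<subseteq> coord S i"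
    using assms by (auto simp: desc_def)
qed

lemma arith_bound:
  fixes m t :: nat
  assumes "m \<le> t + 1"
  shows "m + m * (t + 1 - m) \<le> nat \<lfloor>(real t / 2 + 1) ^ 2\<rfloor>"
proof -
  have d: "real (t + 1 - m) = real t + 1 - real m" using assms by (simp add: of_nat_diff)
  have e0: "real (m + m * (t + 1 - m)) = real m + real m * real (t + 1 - m)"
    by (simp only: of_nat_add of_nat_mult)
  have e: "real (m + m * (t + 1 - m)) = real m * (real t + 2 - real m)"
    unfolding e0 d by (simp add: algebra_simps)
  have "real m * (real t + 2 - real m) \<le> (real t / 2 + 1) ^ 2"
  proof -
    have "0 \<le> (real t / 2 + 1 - real m) ^ 2" by simp
    thus ?thesis by (simp add: power2_eq_square algebra_simps)
  qed
  hence "of_int (int (m + m * (t + 1 - m))) \<le> (real t / 2 + 1) ^ 2" using e by simp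
  hence "int (m + m * (t + 1 - m)) \<le> \<lfloor>(real t / 2 + 1) ^ 2\<rfloor>"
    by (simp only: le_floor_iff)
  thus ?thesis by linarith
qed

lemma minimal_size:
  fixes G :: "'b set set"
  assumes fin: "finite G" and mem: "\<forall>F\<in>G. finite F \<and> card F \<le> t"
    and empt: "\<Inter> G = {}" and mn: "\<forall>F\<in>G. \<Inter> (G - {F}) \<noteq> {}"
  shows "card (\<Union> G) \<le> nat \<lfloor>(real t / 2 + 1) ^ 2\<rfloor>"
proof -
  define x where "x F = (SOME y. y \<in> \<Inter> (G - {F}))" for F
  have xin: "x F \<in> \<Inter> (G - {F})" if "F \<in> G" for F
    using mn that unfolding x_def by (meson ex_in_conv someI_ex)
  have xn: "x F \<notin> F" if "F \<in> G" for F
  proof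
    assume "x F \<in> F"
    hence "x F \<in> \<Inter> G" using xin[OF that] by blast
    thus False using empt by simp
  qed
  have inj: "inj_on x G"
  proof (rule inj_onI)
    fix F F' assume a: "F \<in> G" "F' \<in> G" "x F = x F'"
    show "F = F'"
    proof (rule ccontr)
      assume "F \<noteq> F'"
      hence "x F' \<in> F" using xin[OF a(2)] a(1) by blast
      thus False using xn[OF a(1)] a(3) by simp
    qed
  qed
  define X where "X = x ` G"
  define m where "m = card G"
  have cX: "card X = m" unfolding X_def m_def using card_image[OF inj] .
  have finX: "finite X" unfolding X_def using fin by simp
  have sub: "X - {x F} \<subseteq> F" if "F \<in> G" for F
  proof
    fix y assume y: "y \<in> X - {x F}"
    then obtain F' where F': "F' \<in> G" "y = x F'" unfolding X_def by blast
    hence "F' \<noteq> F" using y by blast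
    hence "F \<in> G - {F'}" using that by blast
    thus "y \<in> F" using xin[OF F'(1)] F'(2) by blast
  qed
  have xX: "x F \<in> X" if "F \<in> G" for F unfolding X_def using that by simp
  have key: "m - 1 \<le> t \<and> card (F - X) \<le> t + 1 - m" if "F \<in> G" for F
  proof -
    have fF: "finite F" "card F \<le> t" using mem that by auto
    have "card (X - {x F}) = m - 1" using cX finX xX[OF that] by simp
    moreover have "X - {x F} \<subseteq> F \<inter> X" using sub[OF that] by blast
    ultimately have "m - 1 \<le> card (F \<inter> X)"
      by (metis card_mono fF(1) finite_Int)
    moreover have "card F = card (F \<inter> X) + card (F - X)"
      using fF(1) by (metis card_Int_Diff)
    ultimately show ?thesis using fF(2) by linarith
  qed
  have "\<Union> G \<subseteq> X \<union> (\<Union>F\<in>G. F - X)" by blast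
  hence "card (\<Union> G) \<le> card (X \<union> (\<Union>F\<in>G. F - X))"
    by (intro card_mono) (use fin mem finX in auto)
  also have "\<dots> \<le> card X + card (\<Union>F\<in>G. F - X)" by (rule card_Un_le)
  also have "card (\<Union>F\<in>G. F - X) \<le> (\<Sum>F\<in>G. card (F - X))" by (rule card_UN_le[OF fin])
  also have "\<dots> \<le> (\<Sum>F\<in>G. t + 1 - m)" by (rule sum_mono) (use key in auto)
  also have "\<dots> = m * (t + 1 - m)" by (simp add: m_def)
  finally have A: "card (\<Union> G) \<le> m + m * (t + 1 - m)" using cX by simp
  show ?thesis
  proof (cases "G = {}")
    case True thus ?thesis by simp
  next
    case False
    then obtain F where "F \<in> G" by blast
    hence "m - 1 \<le> t" using key by blast
    hence "m \<le> t + 1" by linarith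
    from le_trans[OF A arith_bound[OF this]] show ?thesis .
  qed
qed

theorem corollary4:
  fixes Q :: "'a set" and C :: "'a list set" and t n q u :: nat
  assumes "t \<ge> 1" and "n \<ge> 1" and "q \<ge> 1"
    and "u = nat \<lfloor>(real t / 2 + 1) ^ 2\<rfloor>"
    and "is_code Q n q C"
  shows "is_MIPPC n t C \<longleftrightarrow>
    \<not> (\<exists>F. minimal_forbidden_configuration n t C F \<and> config_size F \<le> u)"
proof -
  have Cw: "C \<subseteq> words Q n" and fQ: "finite Q" using assms(5) by (auto simp: is_code_def)
  have "finite (words Q n)" unfolding words_def
    using finite_lists_length_eq[OF fQ, of n] by (simp add: conj_commute)
  hence finC: "finite C" using finite_subset[OF Cw] by blast
  have lenC: "\<forall>c\<in>C. length c = n" using Cw by (auto simp: words_def)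
  show ?thesis
  proof
    assume mi: "is_MIPPC n t C"
    show "\<not> (\<exists>F. minimal_forbidden_configuration n t C F \<and> config_size F \<le> u)"
    proof
      assume "\<exists>F. minimal_forbidden_configuration n t C F \<and> config_size F \<le> u"
      then obtain F where F: "minimal_forbidden_configuration n t C F" by blast
      hence cf: "configuration t C F" and fb: "forbidden n F"
        by (auto simp: minimal_forbidden_configuration_def minimal_configuration_def)
      from cf obtain F1 where F1: "F1 \<in> F" by (auto simp: configuration_def)
      have F1p: "F1 \<subseteq> C" "F1 \<noteq> {}" "card F1 \<le> t" using cf F1 by (auto simp: configuration_def)
      have "F \<subseteq> S_t n t C F1"
      proof
        fix Fi assume Fi: "Fi \<in> F"
        have "\<forall>i<n. coord Fi i = coord F1 i" using fb Fi F1 unfolding forbidden_def by blast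
        hence "desc n Fi = desc n F1" unfolding desc_def by simp
        thus "Fi \<in> S_t n t C F1" using cf Fi by (auto simp: S_t_def configuration_def)
      qed
      hence "\<Inter> (S_t n t C F1) \<subseteq> \<Inter> F" by blast
      hence "\<Inter> (S_t n t C F1) = {}" using cf unfolding configuration_def by blast
      thus False using mi F1p unfolding is_MIPPC_def by blast
    qed
  next
    assume nf: "\<not> (\<exists>F. minimal_forbidden_configuration n t C F \<and> config_size F \<le> u)"
    show "is_MIPPC n t C"
    proof (rule ccontr)
      assume "\<not> is_MIPPC n t C"
      then obtain C' where C': "C' \<subseteq> C" "C' \<noteq> {}" "card C' \<le> t"
        and E: "\<Inter> (S_t n t C C') = {}" unfolding is_MIPPC_def by blast
      define S where "S = S_t n t C C'"
      have finS: "finite S" unfolding S_def S_t_def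
        using finC by (rule rev_finite_subset[OF finite_Pow_iff[THEN iffD2]]) auto
      define P where "P k = (\<exists>G. G \<subseteq> S \<and> \<Inter> G = {} \<and> card G = k)" for k
      have "P (card S)" using E unfolding P_def S_def by blast
      define k where "k = (LEAST k. P k)"
      have "P k" unfolding k_def by (rule LeastI) fact
      then obtain G where G: "G \<subseteq> S" "\<Inter> G = {}" "card G = k" unfolding P_def by blast
      have finG: "finite G" using finite_subset[OF G(1) finS] .
      have mn: "\<forall>F\<in>G. \<Inter> (G - {F}) \<noteq> {}"
      proof (intro ballI notI)
        fix F assume "F \<in> G" "\<Inter> (G - {F}) = {}"
        hence "P (k - 1)" unfolding P_def using G finG
          by (intro exI[of _ "G - {F}"]) auto
        hence "k \<le> k - 1" unfolding k_def by (rule Least_le)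
        moreover have "k \<ge> 1" using G \<open>F \<in> G\<close> finG
          by (metis card_0_eq empty_iff less_one not_le)
        ultimately show False by simp
      qed
      have descC'ne: "desc n C' \<noteq> {}"
      proof -
        obtain c where "c \<in> C'" using C'(2) by blast
        hence "c \<in> desc n C'" using C'(1) lenC by (auto simp: desc_def coord_def)
        thus ?thesis by blast
      qed
      have memS: "Fi \<subseteq> C \<and> card Fi \<le> t \<and> desc n Fi = desc n C' \<and> Fi \<noteq> {}" if "Fi \<in> G" for Fi
      proof -
        have a: "Fi \<subseteq> C" "card Fi \<le> t" "desc n Fi = desc n C'"
          using G(1) that unfolding S_def S_t_def by auto
        have "Fi \<noteq> {}"
        proof
          assume "Fi = {}"
          hence "desc n Fi = {}" using assms(2) unfolding desc_def coord_def by (auto intro!: exI[of _ 0])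
          thus False using a(3) descC'ne by simp
        qed
        thus ?thesis using a by simp
      qed
      have Gne: "G \<noteq> {}" using G(2) by auto
      have conf: "minimal_forbidden_configuration n t C G"
        unfolding minimal_forbidden_configuration_def minimal_configuration_def
          configuration_def forbidden_def
      proof (intro conjI ballI allI impI)
        show "finite G" "G \<noteq> {}" "\<Inter> G = {}" by fact+
      next
        fix Fi assume "Fi \<in> G" thus "Fi \<noteq> {}" "Fi \<subseteq> C" "card Fi \<le> t" using memS by auto
      next
        fix Fi assume "Fi \<in> G" thus "\<Inter> (G - {Fi}) \<noteq> {}" using mn by auto
      next
        fix Fi Fj i assume a: "Fi \<in> G" "Fj \<in> G" "i < n"
        have li: "\<forall>c\<in>Fi. length c = n" "\<forall>c\<in>Fj. length c = n" using memS a lenC by blast+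
        show "coord Fi i = coord Fj i"
          using coord_desc[OF li(1) a(3)] coord_desc[OF li(2) a(3)] memS[OF a(1)] memS[OF a(2)]
          by simp
      qed
      have "config_size G \<le> u" unfolding config_size_def assms(4)
        by (rule minimal_size[OF finG _ G(2) mn]) (use memS finC in \<open>auto intro: finite_subset\<close>)
      thus False using nf conf by blast
    qed
  qed
qed

end
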